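(* Assume Conditions C1–C4 hold. Let $r_1\in(0,\frac{r}{8+r})$ and $r_2=\min\big(\frac{r}{32+4r},\frac{4+r}{32+4r}-\frac{r_1}{4}\big)$, and suppose $p=o\{\exp(n^{r_1-c})\}$ and $m_0=o(n^{r_2-c})$ for some arbitrarily small $c\in(0,\min\{r_1,r_2\})$. Then $\|S-\Theta\|_{max}=o_p(m_0^{-2})$.
   Context: Asymptotic setting: for each $n$, $X=(X_1,\dots,X_p)^\top$ has mean zero and positive definite covariance $\Theta=(\theta_{jk})$ ($p,\Theta$ may depend on $n$); $X^{(1)},\dots,X^{(n)}$ i.i.d. copies; $S=(S_{jk})=n^{-1}\sum_iX^{(i)}X^{(i)\top}$; $\|\cdot\|_{max}$ is the maximum absolute entry. Index the $m=p(p+1)/2$ pairs $jk$, $1\le j\le k\le p$, in order $11,\dots,1p,22,\dots,pp$; $\theta=\mathrm{vech}(\Theta)$, $s=\mathrm{vech}(S)$. For $\vartheta\in\mathbb{R}^m$, $x\in\mathbb{R}^p$: $\ell_{jj}(\vartheta;x)=-\log\vartheta_{jj}-x_j^2/\vartheta_{jj}$; for $j<k$, $\ell_{jk}(\vartheta;x)=-\log(\vartheta_{jj}\vartheta_{kk}-\vartheta_{jk}^2)-(\vartheta_{kk}x_j^2-2\vartheta_{jk}x_jx_k+\vartheta_{jj}x_k^2)/(\vartheta_{jj}\vartheta_{kk}-\vartheta_{jk}^2)$; $u_{jk}=\partial\ell_{jk}/\partial\vartheta\in\mathbb{R}^m$; $U(\vartheta;x)$ the $m\times m$ matrix with columns $u_{jk}(\vartheta;x)$;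 $J=\mathbb{E}[U(\theta;X)^\top U(\theta;X)]$, $h=\mathrm{diag}(J)$. $m_0$ is the number of pairs $j<k$ with $\theta_{jk}\ne0$; $\xi=\{jk:j<k,\theta_{jk}\ne0\}\cup\{jj:\theta_{jl}\ne0\text{ for some }l\ne j\}$; $a_A$, $M_A$, $M_{A,B}$ denote subvectors/submatrices on index sets. Conditions: C1: entries of $\Theta$ uniformly bounded; nonzero entries bounded away from $0$ in absolute value. C2: entries of $J$, $J_\xi^{-1}$, $J_\xi^{-1}h_\xi$ uniformly bounded. C3: there is $c>0$, for all $m_0\ge1$, with $\min_x\|J_{\xi,\xi_{-l}}x-h_\xi\|_1>c$ for all $l=1,\dots,|\xi|$ ($x\in\mathbb{R}^{|\xi|-1}$, $J_{\xi,\xi_{-l}}$ is $J_\xi$ without its $l$-th column). C4: there exist $r>0$, $c>0$ with $\Pr(|X_j|>t)<c\exp(-t^r)$ for all $t\ge0$, $j=1,\dots,p$. *)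

theory Defs
  imports "HOL-Probability.Probability" "HOL-Library.Landau_Symbols"
begin

text \<open>Model: for each sample size n, a probability space M n, dimension p n,
 and random vectors X n i (i < n are the i.i.d. copies, X n 0 also serves as the
 generic X).\<close>

definition Theta :: "(nat \<Rightarrow> 'a measure) \<Rightarrow> (nat \<Rightarrow> nat \<Rightarrow> 'a \<Rightarrow> nat \<Rightarrow> real)
    \<Rightarrow> nat \<Rightarrow> nat \<Rightarrow> nat \<Rightarrow> real" where
  "Theta M X n j k = integral\<^sup>L (M n) (\<lambda>w. X n 0 w j * X n 0 w k)"

definition pairs :: "nat \<Rightarrow> (nat \<times> nat) set" where
  "pairs p = {(j,k). j \<le> k \<and> k < p}"

text \<open>Pairwise (and marginal) Gaussian log-likelihoods; vartheta is indexed by pairs.\<close>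
definition loglik :: "nat \<times> nat \<Rightarrow> (nat \<times> nat \<Rightarrow> real) \<Rightarrow> (nat \<Rightarrow> real) \<Rightarrow> real" where
  "loglik a v x = (case a of (j,k) \<Rightarrow>
     if j = k then - ln (v (j,j)) - (x j)\<^sup>2 / v (j,j)
     else - ln (v (j,j) * v (k,k) - (v (j,k))\<^sup>2)
          - (v (k,k) * (x j)\<^sup>2 - 2 * v (j,k) * x j * x k + v (j,j) * (x k)\<^sup>2)
            / (v (j,j) * v (k,k) - (v (j,k))\<^sup>2))"

definition score :: "nat \<times> nat \<Rightarrow> (nat \<times> nat \<Rightarrow> real) \<Rightarrow> (nat \<Rightarrow> real) \<Rightarrow> nat \<times> nat \<Rightarrow> real" where
  "score a v x c = deriv (\<lambda>t. loglik a (v(c := t)) x) (v c)"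

definition theta_vec :: "(nat \<Rightarrow> 'a measure) \<Rightarrow> (nat \<Rightarrow> nat \<Rightarrow> 'a \<Rightarrow> nat \<Rightarrow> real)
    \<Rightarrow> nat \<Rightarrow> nat \<times> nat \<Rightarrow> real" where
  "theta_vec M X n = (\<lambda>(j,k). Theta M X n j k)"

text \<open>J = E[U^T U], entry (a,b) = E[ sum_c u_a(c) u_b(c) ].\<close>
definition Jmat :: "(nat \<Rightarrow> 'a measure) \<Rightarrow> (nat \<Rightarrow> nat) \<Rightarrow> (nat \<Rightarrow> nat \<Rightarrow> 'a \<Rightarrow> nat \<Rightarrow> real)
    \<Rightarrow> nat \<Rightarrow> nat \<times> nat \<Rightarrow> nat \<times> nat \<Rightarrow> real" where
  "Jmat M p X n a b = integral\<^sup>L (M n) (\<lambda>w. \<Sum>c\<in>pairs (p n).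
      score a (theta_vec M X n) (X n 0 w) c * score b (theta_vec M X n) (X n 0 w) c)"

definition hvec :: "(nat \<Rightarrow> 'a measure) \<Rightarrow> (nat \<Rightarrow> nat) \<Rightarrow> (nat \<Rightarrow> nat \<Rightarrow> 'a \<Rightarrow> nat \<Rightarrow> real)
    \<Rightarrow> nat \<Rightarrow> nat \<times> nat \<Rightarrow> real" where
  "hvec M p X n a = Jmat M p X n a a"

definition m0 :: "(nat \<Rightarrow> 'a measure) \<Rightarrow> (nat \<Rightarrow> nat) \<Rightarrow> (nat \<Rightarrow> nat \<Rightarrow> 'a \<Rightarrow> nat \<Rightarrow> real)
    \<Rightarrow> nat \<Rightarrow> nat" where
  "m0 M p X n = card {(j,k). j < k \<and> k < p n \<and> Theta M X n j k \<noteq> 0}"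

definition xi :: "(nat \<Rightarrow> 'a measure) \<Rightarrow> (nat \<Rightarrow> nat) \<Rightarrow> (nat \<Rightarrow> nat \<Rightarrow> 'a \<Rightarrow> nat \<Rightarrow> real)
    \<Rightarrow> nat \<Rightarrow> (nat \<times> nat) set" where
  "xi M p X n = {(j,k). j < k \<and> k < p n \<and> Theta M X n j k \<noteq> 0}
     \<union> {(j,j) | j. j < p n \<and> (\<exists>l < p n. l \<noteq> j \<and> Theta M X n j l \<noteq> 0)}"

definition is_inverse_on :: "('b \<Rightarrow> 'b \<Rightarrow> real) \<Rightarrow> ('b \<Rightarrow> 'b \<Rightarrow> real) \<Rightarrow> 'b set \<Rightarrow> bool" where
  "is_inverse_on A B I = (\<forall>a\<in>I. \<forall>b\<in>I. (\<Sum>c\<in>I. A a c * B c b) = (if a = b then 1 else 0))"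

definition Scov :: "(nat \<Rightarrow> nat \<Rightarrow> 'a \<Rightarrow> nat \<Rightarrow> real) \<Rightarrow> nat \<Rightarrow> 'a \<Rightarrow> nat \<Rightarrow> nat \<Rightarrow> real" where
  "Scov X n w j k = (\<Sum>i<n. X n i w j * X n i w k) / real n"

definition maxdev :: "(nat \<Rightarrow> 'a measure) \<Rightarrow> (nat \<Rightarrow> nat) \<Rightarrow> (nat \<Rightarrow> nat \<Rightarrow> 'a \<Rightarrow> nat \<Rightarrow> real)
    \<Rightarrow> nat \<Rightarrow> 'a \<Rightarrow> real" where
  "maxdev M p X n w = Max (insert 0 {\<bar>Scov X n w j k - Theta M X n j k\<bar> | j k. j < p n \<and> k < p n})"

end

theory Submission
  imports Defs "HOL-Real_Asymp.Real_Asymp"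
begin

lemma summable_tailq:
  assumes "(r::real) > 0"
  shows "summable (\<lambda>k::nat. real (k+1)^q * exp(-(real k powr r)))"
proof (rule summable_comparison_test_bigo)
  show "summable (\<lambda>n. norm (inverse (real n ^ 2)))"
    using inverse_power_summable[of 2, where 'a=real] by simp
  show "(\<lambda>k::nat. real (k+1)^q * exp(-(real k powr r))) \<in> O(\<lambda>k. inverse (real k ^ 2))"
    using assms by real_asymp
qed

lemma pow_le_suminf_ind:
  fixes z :: real and q :: nat
  assumes "q \<ge> 1"
  shows "ennreal (\<bar>z\<bar>^q) \<le> (\<Sum>k. ennreal (real (k+1)^q) * indicator {x. \<bar>x\<bar> > real k} z)"
proof (cases "z = 0")
  case True
  then show ?thesis using assms by simp
next
  case False
  define m where "m = nat \<lceil>\<bar>z\<bar>\<rceil> - 1"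
  have m1: "real m < \<bar>z\<bar>" and m2: "\<bar>z\<bar> \<le> real m + 1"
    using False unfolding m_def by (linarith, linarith)
  have "\<bar>z\<bar>^q \<le> (real m + 1)^q"
    by (rule power_mono) (use m2 in auto)
  hence "ennreal (\<bar>z\<bar>^q) \<le> ennreal (real (m+1)^q) * indicator {x. \<bar>x\<bar> > real m} z"
    using m1 by (simp add: add.commute)
  also have "\<dots> \<le> (\<Sum>k. ennreal (real (k+1)^q) * indicator {x. \<bar>x\<bar> > real k} z)"
  proof -
    define f where "f = (\<lambda>k. ennreal (real (k+1)^q) * indicator {x. \<bar>x\<bar> > real k} z)"
    have "f m \<le> suminf f" using sum_le_suminf[OF summableI, of "{m}" f] by simp
    then show ?thesis unfolding f_def .
  qed
  finally show ?thesis .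
qed

lemma moment_bound:
  fixes Z :: "'a \<Rightarrow> real" and q :: nat
  assumes P: "prob_space M" and Zm: "Z \<in> borel_measurable M" and r: "r > 0" and q: "q \<ge> 1"
    and tail: "\<And>t. t \<ge> 0 \<Longrightarrow> measure M {w\<in>space M. \<bar>Z w\<bar> > t} \<le> c4 * exp(-(t powr r))"
  shows "integrable M (\<lambda>w. \<bar>Z w\<bar>^q)"
    "(\<integral>w. \<bar>Z w\<bar>^q \<partial>M) \<le> c4 * (\<Sum>k. real (k+1)^q * exp(-(real k powr r)))"
proof -
  interpret prob_space M by fact
  define S where "S = (\<Sum>k. real (k+1)^q * exp(-(real k powr r)))"
  have summ: "summable (\<lambda>k::nat. real (k+1)^q * exp(-(real k powr r)))"
    using summable_tailq[OF r] .
  have c4: "c4 \<ge> 0"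
  proof -
    have "0 \<le> measure M {w\<in>space M. \<bar>Z w\<bar> > 0}" by simp
    also have "\<dots> \<le> c4 * exp(-(0 powr r))" using tail[of 0] by simp
    finally show ?thesis by (simp add: zero_le_mult_iff)
  qed
  have meas_k: "{w\<in>space M. \<bar>Z w\<bar> > real k} \<in> sets M" for k
    using Zm by measurable
  have "(\<integral>\<^sup>+w. ennreal (\<bar>Z w\<bar>^q) \<partial>M)
      \<le> (\<integral>\<^sup>+w. (\<Sum>k. ennreal (real (k+1)^q) * indicator {w\<in>space M. \<bar>Z w\<bar> > real k} w) \<partial>M)"
  proof (rule nn_integral_mono)
    fix w assume w: "w \<in> space M"
    have "ennreal (\<bar>Z w\<bar>^q) \<le> (\<Sum>k. ennreal (real (k+1)^q) * indicator {x. \<bar>x\<bar> > real k} (Z w))"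
      by (rule pow_le_suminf_ind[OF q])
    also have "\<dots> = (\<Sum>k. ennreal (real (k+1)^q) * indicator {w\<in>space M. \<bar>Z w\<bar> > real k} w)"
      using w by (simp add: indicator_def)
    finally show "ennreal (\<bar>Z w\<bar>^q) \<le> \<dots>" .
  qed
  also have "\<dots> = (\<Sum>k. (\<integral>\<^sup>+w. ennreal (real (k+1)^q) * indicator {w\<in>space M. \<bar>Z w\<bar> > real k} w \<partial>M))"
    by (rule nn_integral_suminf) (use meas_k in measurable)
  also have "\<dots> = (\<Sum>k. ennreal (real (k+1)^q) * emeasure M {w\<in>space M. \<bar>Z w\<bar> > real k})"
    using meas_k by (simp add: nn_integral_cmult_indicator)
  also have "\<dots> \<le> (\<Sum>k. ennreal (c4 * (real (k+1)^q * exp(-(real k powr r)))))"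
  proof (rule suminf_le)
    fix k
    have "emeasure M {w\<in>space M. \<bar>Z w\<bar> > real k} = ennreal (measure M {w\<in>space M. \<bar>Z w\<bar> > real k})"
      by (simp add: emeasure_eq_measure)
    also have "\<dots> \<le> ennreal (c4 * exp(-(real k powr r)))"
      using tail[of "real k"] by (simp add: ennreal_leI)
    finally have "ennreal (real (k+1)^q) * emeasure M {w\<in>space M. \<bar>Z w\<bar> > real k}
        \<le> ennreal (real (k+1)^q) * ennreal (c4 * exp(-(real k powr r)))"
      by (rule mult_left_mono) simp
    also have "\<dots> = ennreal (c4 * (real (k+1)^q * exp(-(real k powr r))))"
      using c4 by (simp add: ennreal_mult'[symmetric] mult_ac)
    finally show "ennreal (real (k+1)^q) * emeasure M {w\<in>space M. \<bar>Z w\<bar> > real k}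
        \<le> ennreal (c4 * (real (k+1)^q * exp(-(real k powr r))))" .
  qed auto
  also have "\<dots> = ennreal (c4 * S)"
    unfolding S_def using c4 summ
    by (subst suminf_ennreal2) (auto intro!: summable_mult simp: suminf_mult)
  finally have nn: "(\<integral>\<^sup>+w. ennreal (\<bar>Z w\<bar>^q) \<partial>M) \<le> ennreal (c4 * S)" .
  show int: "integrable M (\<lambda>w. \<bar>Z w\<bar>^q)"
  proof (rule integrableI_bounded)
    show "(\<lambda>w. \<bar>Z w\<bar>^q) \<in> borel_measurable M" using Zm by measurable
    show "(\<integral>\<^sup>+w. ennreal (norm (\<bar>Z w\<bar>^q)) \<partial>M) < \<infinity>"
      using nn by (simp add: le_less_trans)
  qed
  have "(\<integral>w. \<bar>Z w\<bar>^q \<partial>M) = enn2real (\<integral>\<^sup>+w. ennreal (\<bar>Z w\<bar>^q) \<partial>M)"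
    by (rule integral_eq_nn_integral) (use Zm in auto)
  also have "\<dots> \<le> enn2real (ennreal (c4 * S))"
    by (rule enn2real_mono[OF nn]) simp
  also have "\<dots> = c4 * S"
  proof -
    have "S \<ge> 0" unfolding S_def by (rule suminf_nonneg[OF summ]) simp
    then show ?thesis using c4 by simp
  qed
  finally show "(\<integral>w. \<bar>Z w\<bar>^q \<partial>M) \<le> c4 * (\<Sum>k. real (k+1)^q * exp(-(real k powr r)))"
    unfolding S_def .
qed


lemma max_pow_le:
  fixes x y :: real
  shows "(max \<bar>x\<bar> \<bar>y\<bar>)^q \<le> \<bar>x\<bar>^q + \<bar>y\<bar>^q"
  by (cases "\<bar>x\<bar> \<le> \<bar>y\<bar>") (auto simp: max_def)

lemma prod_le_pow:
  fixes x y :: real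
  assumes q: "q \<ge> 2"
  shows "\<bar>x * y\<bar> \<le> \<bar>x\<bar>^q + \<bar>y\<bar>^q + 1"
proof -
  define m where "m = max \<bar>x\<bar> \<bar>y\<bar>"
  have m0: "m \<ge> 0" unfolding m_def by simp
  have "\<bar>x * y\<bar> \<le> m * m"
    unfolding m_def abs_mult by (intro mult_mono) auto
  also have "\<dots> \<le> m^q + 1"
  proof (cases "m \<le> 1")
    case True
    then have "m * m \<le> 1" using m0 by (metis mult_le_one)
    then show ?thesis using m0 by (smt (verit) zero_le_power)
  next
    case False
    then have "m^2 \<le> m^q" by (intro power_increasing q) auto
    then show ?thesis by (simp add: power2_eq_square)
  qed
  also have "\<dots> \<le> \<bar>x\<bar>^q + \<bar>y\<bar>^q + 1"
    using max_pow_le[of x y q] unfolding m_def by simp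
  finally show ?thesis .
qed

lemma trunc_err:
  fixes x y T :: real and q :: nat
  assumes T: "T \<ge> 1" and q: "q \<ge> 2"
  shows "\<bar>x*y - max (-T) (min T x) * max (-T) (min T y)\<bar> \<le> 2*(\<bar>x\<bar>^q + \<bar>y\<bar>^q) / T^(q-2)"
proof (cases "\<bar>x\<bar> \<le> T \<and> \<bar>y\<bar> \<le> T")
  case True
  then have "max (-T) (min T x) = x" "max (-T) (min T y) = y" by auto
  then show ?thesis using T by simp
next
  case False
  define m where "m = max \<bar>x\<bar> \<bar>y\<bar>"
  have mT: "m > T" using False unfolding m_def by auto
  have Tp: "T > 0" using T by simp
  have tx: "\<bar>max (-T) (min T x)\<bar> \<le> \<bar>x\<bar>" and ty: "\<bar>max (-T) (min T y)\<bar> \<le> \<bar>y\<bar>"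
    using T by auto
  have "\<bar>x*y - max (-T) (min T x) * max (-T) (min T y)\<bar>
      \<le> \<bar>x\<bar>*\<bar>y\<bar> + \<bar>max (-T) (min T x)\<bar> * \<bar>max (-T) (min T y)\<bar>"
    by (metis abs_diff_le_iff abs_mult abs_triangle_ineq4 add.commute)
  also have "\<dots> \<le> 2 * (m * m)"
  proof -
    have "\<bar>x\<bar>*\<bar>y\<bar> \<le> m * m" unfolding m_def by (intro mult_mono) auto
    moreover have "\<bar>max (-T) (min T x)\<bar> * \<bar>max (-T) (min T y)\<bar> \<le> m * m"
    proof -
      have a: "\<bar>max (-T) (min T x)\<bar> \<le> m" using tx unfolding m_def by (meson max.cobounded1 order_trans)
      have b: "\<bar>max (-T) (min T y)\<bar> \<le> m" using ty unfolding m_def by (meson max.cobounded2 order_trans)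
      have "0 \<le> m" unfolding m_def by simp
      then show ?thesis using a b by (intro mult_mono) auto
    qed
    ultimately show ?thesis by simp
  qed
  also have "\<dots> \<le> 2 * ((\<bar>x\<bar>^q + \<bar>y\<bar>^q) / T^(q-2))"
  proof -
    have "(m * m) * T^(q-2) \<le> (m*m) * m^(q-2)"
      using mT Tp by (intro mult_left_mono power_mono) auto
    also have "\<dots> = m^q"
    proof -
      have "q = Suc (Suc (q-2))" using q by simp
      then have "m^q = m^(Suc (Suc (q-2)))" by (metis)
      then show ?thesis by simp
    qed
    also have "\<dots> \<le> \<bar>x\<bar>^q + \<bar>y\<bar>^q" unfolding m_def by (rule max_pow_le)
    finally have "m * m \<le> (\<bar>x\<bar>^q + \<bar>y\<bar>^q) / T^(q-2)"
      using Tp by (simp add: pos_le_divide_eq)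
    then show ?thesis by linarith
  qed
  finally show ?thesis by simp
qed


lemma trunc_prod_bound:
  fixes T a b :: real
  assumes "T > 0"
  shows "\<bar>max (-T) (min T a) * max (-T) (min T b)\<bar> \<le> T*T"
  using assms by (auto simp: abs_mult intro!: mult_mono)


lemma ident_comp:
  fixes Xi X0 :: "'a \<Rightarrow> nat \<Rightarrow> real"
  assumes mi: "\<And>j. (\<lambda>w. Xi w j) \<in> borel_measurable M"
    and m0: "\<And>j. (\<lambda>w. X0 w j) \<in> borel_measurable M"
    and eq: "distr M (PiM I (\<lambda>_. borel)) (\<lambda>w. restrict (Xi w) I)
           = distr M (PiM I (\<lambda>_. borel)) (\<lambda>w. restrict (X0 w) I)"
    and g: "g \<in> borel_measurable (PiM I (\<lambda>_. borel))"
  shows "distr M borel (\<lambda>w. g (restrict (Xi w) I)) = distr M borel (\<lambda>w. g (restrict (X0 w) I))"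
proof -
  have vi: "(\<lambda>w. restrict (Xi w) I) \<in> measurable M (PiM I (\<lambda>_. borel))"
    by (rule measurable_restrict) (use mi in auto)
  have v0: "(\<lambda>w. restrict (X0 w) I) \<in> measurable M (PiM I (\<lambda>_. borel))"
    by (rule measurable_restrict) (use m0 in auto)
  have "distr M borel (\<lambda>w. g (restrict (Xi w) I)) = distr (distr M (PiM I (\<lambda>_. borel)) (\<lambda>w. restrict (Xi w) I)) borel g"
    using distr_distr[OF g vi] by (simp add: comp_def)
  also have "\<dots> = distr (distr M (PiM I (\<lambda>_. borel)) (\<lambda>w. restrict (X0 w) I)) borel g"
    using eq by simp
  also have "\<dots> = distr M borel (\<lambda>w. g (restrict (X0 w) I))"
    using distr_distr[OF g v0] by (simp add: comp_def)
  finally show ?thesis .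
qed

lemma ident_tail:
  fixes Xi X0 :: "'a \<Rightarrow> nat \<Rightarrow> real"
  assumes mi: "\<And>j. (\<lambda>w. Xi w j) \<in> borel_measurable M"
    and m0: "\<And>j. (\<lambda>w. X0 w j) \<in> borel_measurable M"
    and eq: "distr M (PiM I (\<lambda>_. borel)) (\<lambda>w. restrict (Xi w) I)
           = distr M (PiM I (\<lambda>_. borel)) (\<lambda>w. restrict (X0 w) I)"
    and j: "j \<in> I"
  shows "measure M {w\<in>space M. \<bar>Xi w j\<bar> > T} = measure M {w\<in>space M. \<bar>X0 w j\<bar> > T}"
proof -
  have g: "(\<lambda>f. f j) \<in> borel_measurable (PiM I (\<lambda>_. borel))"
    using j by (rule measurable_component_singleton)
  have d: "distr M borel (\<lambda>w. Xi w j) = distr M borel (\<lambda>w. X0 w j)"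
    using ident_comp[OF mi m0 eq g] j by simp
  have S: "{x::real. T < \<bar>x\<bar>} \<in> sets borel" by measurable
  have "measure M {w\<in>space M. \<bar>Xi w j\<bar> > T} = measure (distr M borel (\<lambda>w. Xi w j)) {x. T < \<bar>x\<bar>}"
    by (subst measure_distr[OF mi S]) (auto intro!: arg_cong[where f="measure M"])
  also have "\<dots> = measure (distr M borel (\<lambda>w. X0 w j)) {x. T < \<bar>x\<bar>}" using d by simp
  also have "\<dots> = measure M {w\<in>space M. \<bar>X0 w j\<bar> > T}"
    by (subst measure_distr[OF m0 S]) (auto intro!: arg_cong[where f="measure M"])
  finally show ?thesis .
qed


lemma core:
  fixes M :: "'a measure" and Xs :: "nat \<Rightarrow> 'a \<Rightarrow> nat \<Rightarrow> real" and p n :: nat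
    and T eps PT K :: real and q :: nat
  assumes P: "prob_space M"
    and meas: "\<And>i j. (\<lambda>w. Xs i w j) \<in> borel_measurable M"
    and indep: "prob_space.indep_vars M (\<lambda>_. PiM {..<p} (\<lambda>_. borel))
                   (\<lambda>i w. restrict (Xs i w) {..<p}) {..<n}"
    and ident: "\<And>i. i < n \<Longrightarrow>
        distr M (PiM {..<p} (\<lambda>_. borel)) (\<lambda>w. restrict (Xs i w) {..<p})
      = distr M (PiM {..<p} (\<lambda>_. borel)) (\<lambda>w. restrict (Xs 0 w) {..<p})"
    and tailT: "\<And>j. j < p \<Longrightarrow> measure M {w \<in> space M. \<bar>Xs 0 w j\<bar> > T} \<le> PT"
    and momi: "\<And>j. j < p \<Longrightarrow> integrable M (\<lambda>w. \<bar>Xs 0 w j\<bar>^q)"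
    and momb: "\<And>j. j < p \<Longrightarrow> (\<integral>w. \<bar>Xs 0 w j\<bar>^q \<partial>M) \<le> K"
    and T: "T \<ge> 1" and q: "q \<ge> 2" and n: "n > 0" and eps: "eps > 0"
    and bias: "4 * K / T^(q-2) \<le> eps / 2"
    and Esub: "E \<subseteq> {w \<in> space M. Max (insert 0 {\<bar>(\<Sum>i<n. Xs i w j * Xs i w k) / real n
             - (\<integral>w. Xs 0 w j * Xs 0 w k \<partial>M)\<bar> | j k. j < p \<and> k < p}) > eps}"
  shows "measure M E \<le> real n * real p * PT + real p^2 * (2 * exp (-(real n * eps^2 / (8 * T^4))))"
proof -
  interpret prob_space M by fact
  note meas[measurable]
  define tr where "tr = (\<lambda>x::real. max (-T) (min T x))"
  define Y where "Y = (\<lambda>j k i w. tr (Xs i w j) * tr (Xs i w k))"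
  define Th where "Th = (\<lambda>j k. (\<integral>w. Xs 0 w j * Xs 0 w k \<partial>M))"
  define A where "A = (\<Union>ij \<in> {..<n}\<times>{..<p}. {w\<in>space M. \<bar>Xs (fst ij) w (snd ij)\<bar> > T})"
  define Bs where "Bs = (\<lambda>jk. {w\<in>space M. \<bar>(\<Sum>i\<in>{..<n}. Y (fst jk) (snd jk) i w)
                 - real n * expectation (Y (fst jk) (snd jk) 0)\<bar> \<ge> real n * eps / 2})"
  define B where "B = (\<Union>jk \<in> {..<p}\<times>{..<p}. Bs jk)"
  have Tp: "T > 0" using T by simp
  have trm[measurable]: "tr \<in> borel_measurable borel" unfolding tr_def by measurable
  have Ym[measurable]: "Y j k i \<in> borel_measurable M" for j k i unfolding Y_def by measurable
  have Asets: "{w\<in>space M. \<bar>Xs (fst ij) w (snd ij)\<bar> > T} \<in> sets M" for ij by measurable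
  have Bsets: "Bs jk \<in> sets M" for jk unfolding Bs_def by measurable
  have Ain: "A \<in> sets M" unfolding A_def using Asets by (intro sets.finite_UN) auto
  have Bin: "B \<in> sets M" unfolding B_def using Bsets by (intro sets.finite_UN) auto
  have biasjk: "\<bar>expectation (Y j k 0) - Th j k\<bar> \<le> eps / 2" if j: "j < p" and k: "k < p" for j k
  proof -
    have intXX: "integrable M (\<lambda>w. Xs 0 w j * Xs 0 w k)"
    proof (rule Bochner_Integration.integrable_bound)
      show "integrable M (\<lambda>w. \<bar>Xs 0 w j\<bar>^q + \<bar>Xs 0 w k\<bar>^q + 1)"
        using momi[OF j] momi[OF k] by auto
      show "AE w in M. norm (Xs 0 w j * Xs 0 w k) \<le> norm (\<bar>Xs 0 w j\<bar>^q + \<bar>Xs 0 w k\<bar>^q + 1)"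
        using prod_le_pow[OF q] by (intro AE_I2) (simp add: add_nonneg_nonneg)
    qed measurable
    have intY: "integrable M (Y j k 0)"
    proof (rule integrable_const_bound[where B="T*T"])
      show "AE w in M. norm (Y j k 0 w) \<le> T*T"
        using Tp by (intro AE_I2) (auto simp: Y_def tr_def abs_mult intro!: mult_mono)
    qed measurable
    define g where "g = (\<lambda>w. (2 / T^(q-2)) * (\<bar>Xs 0 w j\<bar>^q + \<bar>Xs 0 w k\<bar>^q))"
    have intg: "integrable M g" unfolding g_def using momi[OF j] momi[OF k] by auto
    have "\<bar>expectation (Y j k 0) - Th j k\<bar> = \<bar>expectation (\<lambda>w. Xs 0 w j * Xs 0 w k - Y j k 0 w)\<bar>"
      unfolding Th_def using intXX intY by (subst Bochner_Integration.integral_diff) auto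
    also have "\<dots> \<le> expectation (\<lambda>w. \<bar>Xs 0 w j * Xs 0 w k - Y j k 0 w\<bar>)"
      using integral_norm_bound[of M "\<lambda>w. Xs 0 w j * Xs 0 w k - Y j k 0 w"] by simp
    also have "\<dots> \<le> expectation g"
    proof (rule integral_mono)
      show "integrable M (\<lambda>w. \<bar>Xs 0 w j * Xs 0 w k - Y j k 0 w\<bar>)" using intXX intY by auto
      show "integrable M g" by fact
      fix w
      show "\<bar>Xs 0 w j * Xs 0 w k - Y j k 0 w\<bar> \<le> g w"
        using trunc_err[OF T q, of "Xs 0 w j" "Xs 0 w k"] unfolding g_def Y_def tr_def by simp
    qed
    also have "\<dots> = (2 / T^(q-2)) * ((\<integral>w. \<bar>Xs 0 w j\<bar>^q \<partial>M) + (\<integral>w. \<bar>Xs 0 w k\<bar>^q \<partial>M))"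
      unfolding g_def using momi[OF j] momi[OF k] by simp
    also have "\<dots> \<le> (2 / T^(q-2)) * (K + K)"
      using momb[OF j] momb[OF k] Tp by (intro mult_left_mono add_mono) auto
    also have "\<dots> = 4 * K / T^(q-2)" by simp
    also have "\<dots> \<le> eps / 2" by fact
    finally show ?thesis .
  qed
  define S where "S = (\<lambda>w. {\<bar>(\<Sum>i<n. Xs i w j * Xs i w k) / real n
             - (\<integral>w. Xs 0 w j * Xs 0 w k \<partial>M)\<bar> | j k. j < p \<and> k < p})"
  have incl: "{w \<in> space M. Max (insert 0 (S w)) > eps} \<subseteq> A \<union> B"
  proof
    fix w assume wE: "w \<in> {w \<in> space M. Max (insert 0 (S w)) > eps}"
    then have ws: "w \<in> space M" and wm: "Max (insert 0 (S w)) > eps" by auto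
    show "w \<in> A \<union> B"
    proof (cases "w \<in> A")
      case True then show ?thesis by simp
    next
      case False
      then have good: "\<bar>Xs i w j\<bar> \<le> T" if "i < n" "j < p" for i j
        using that ws unfolding A_def by force
      have finS: "finite (S w)"
      proof -
        have "S w = (\<lambda>(j,k). \<bar>(\<Sum>i<n. Xs i w j * Xs i w k) / real n
             - (\<integral>w. Xs 0 w j * Xs 0 w k \<partial>M)\<bar>) ` ({..<p}\<times>{..<p})"
          unfolding S_def by auto
        then show ?thesis by simp
      qed
      obtain s where s: "s \<in> insert 0 (S w)" "eps < s"
        using wm finS by (subst (asm) Max_gr_iff) auto
      then have "s \<in> S w" using eps by auto
      then obtain j k where jk: "j < p" "k < p"
        and sdef: "s = \<bar>(\<Sum>i<n. Xs i w j * Xs i w k) / real n - Th j k\<bar>"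
        unfolding S_def Th_def by auto
      have sumeq: "(\<Sum>i<n. Xs i w j * Xs i w k) = (\<Sum>i\<in>{..<n}. Y j k i w)"
      proof (rule sum.cong)
        fix i assume "i \<in> {..<n}"
        then have "\<bar>Xs i w j\<bar> \<le> T" "\<bar>Xs i w k\<bar> \<le> T" using good jk by auto
        then show "Xs i w j * Xs i w k = Y j k i w" unfolding Y_def tr_def by auto
      qed simp
      define Sm where "Sm = (\<Sum>i\<in>{..<n}. Y j k i w)"
      define E where "E = expectation (Y j k 0)"
      have b: "\<bar>E - Th j k\<bar> \<le> eps / 2" unfolding E_def by (rule biasjk[OF jk])
      have "eps < \<bar>Sm / real n - Th j k\<bar>" using s(2) sdef sumeq Sm_def by simp
      then have "eps / 2 < \<bar>Sm / real n - E\<bar>" using b by linarith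
      then have "real n * (eps / 2) \<le> real n * \<bar>Sm / real n - E\<bar>"
        using n by (intro mult_left_mono) auto
      also have "\<dots> = \<bar>Sm - real n * E\<bar>"
        using n by (simp add: abs_mult[symmetric] field_simps)
      finally have "real n * eps / 2 \<le> \<bar>Sm - real n * E\<bar>" by simp
      then have "w \<in> Bs (j,k)" unfolding Bs_def Sm_def E_def using ws by simp
      then show ?thesis unfolding B_def using jk by auto
    qed
  qed
  have mA: "measure M A \<le> real n * real p * PT"
  proof -
    have "measure M A \<le> (\<Sum>ij\<in>{..<n}\<times>{..<p}. measure M {w\<in>space M. \<bar>Xs (fst ij) w (snd ij)\<bar> > T})"
      unfolding A_def using Asets by (intro measure_UNION_le) auto
    also have "\<dots> \<le> (\<Sum>ij\<in>{..<n}\<times>{..<p}. PT)"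
    proof (rule sum_mono)
      fix ij assume ij: "ij \<in> {..<n}\<times>{..<p}"
      have "measure M {w\<in>space M. \<bar>Xs (fst ij) w (snd ij)\<bar> > T} = measure M {w\<in>space M. \<bar>Xs 0 w (snd ij)\<bar> > T}"
        using ij by (intro ident_tail[where I="{..<p}"] meas ident) auto
      also have "\<dots> \<le> PT" using ij by (intro tailT) auto
      finally show "measure M {w\<in>space M. \<bar>Xs (fst ij) w (snd ij)\<bar> > T} \<le> PT" .
    qed
    also have "\<dots> = real n * real p * PT" by simp
    finally show ?thesis .
  qed
  have mBs: "measure M (Bs (j,k)) \<le> 2 * exp (-(real n * eps^2 / (8 * T^4)))" if jk: "j < p" "k < p" for j k
  proof -
    define g where "g = (\<lambda>f::nat \<Rightarrow> real. tr (f j) * tr (f k))"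
    have gm: "g \<in> borel_measurable (PiM {..<p} (\<lambda>_. borel))"
      unfolding g_def
      by (rule borel_measurable_times; rule measurable_compose[OF _ trm]; rule measurable_component_singleton)
        (use jk in auto)
    have Yg: "Y j k i = (\<lambda>w. g (restrict (Xs i w) {..<p}))" for i
      unfolding Y_def g_def using jk by auto
    have ind: "indep_vars (\<lambda>_. borel) (\<lambda>i. Y j k i) {..<n}"
    proof -
      have "indep_vars (\<lambda>_. borel) (\<lambda>i w. g (restrict (Xs i w) {..<p})) {..<n}"
        by (rule indep_vars_compose2[OF indep]) (use gm in auto)
      then show ?thesis using Yg by simp
    qed
    have dX: "distr M borel (Y j k i) = distr M borel (Y j k 0)" if "i \<in> {..<n}" for i
      unfolding Yg using that by (intro ident_comp[OF _ _ _ gm] meas ident) auto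
    interpret H: Hoeffding_ineq_iid M "{..<n}" "Y j k" "Y j k 0" "-(T*T)" "T*T" "expectation (Y j k 0)"
    proof unfold_locales
      show "AE x in M. Y j k 0 x \<in> {- (T * T)..T * T}"
      proof (rule AE_I2)
        fix x
        have "\<bar>Y j k 0 x\<bar> \<le> T*T" unfolding Y_def tr_def by (rule trunc_prod_bound[OF Tp])
        then show "Y j k 0 x \<in> {- (T * T)..T * T}" by (simp add: abs_le_iff)
      qed
    next
      show "finite {..<n}" by simp
      show "indep_vars (\<lambda>_. borel) (Y j k) {..<n}" using ind by simp
      show "random_variable borel (Y j k 0)" by measurable
      fix i assume "i \<in> {..<n}"
      then show "distr M borel (Y j k i) = distr M borel (Y j k 0)" by (rule dX)
    qed
    have "measure M (Bs (j,k)) \<le> 2 * exp (-2 * (real n * eps / 2)\<^sup>2 / (real (card {..<n::nat}) * (T*T - -(T*T))\<^sup>2))"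
    proof -
      have e0: "0 \<le> real n * eps / 2" using eps by simp
      have ab: "-(T*T) < T*T" using Tp by simp
      have Ine: "{..<n} \<noteq> {}" using n by auto
      note h = H.Hoeffding_ineq_abs_ge[OF e0 ab Ine]
      have c: "real (card {..<n}) = real n" by simp
      show ?thesis unfolding Bs_def fst_conv snd_conv using h unfolding c .
    qed
    also have "-2 * (real n * eps / 2)\<^sup>2 / (real (card {..<n::nat}) * (T*T - -(T*T))\<^sup>2)
        = -(real n * eps^2 / (8 * T^4))"
      using n Tp by (simp add: field_simps power2_eq_square power4_eq_xxxx)
    finally show ?thesis .
  qed
  have mB: "measure M B \<le> real p^2 * (2 * exp (-(real n * eps^2 / (8 * T^4))))"
  proof -
    have "measure M B \<le> (\<Sum>jk\<in>{..<p}\<times>{..<p}. measure M (Bs jk))"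
      unfolding B_def using Bsets by (intro measure_UNION_le) auto
    also have "\<dots> \<le> (\<Sum>jk\<in>{..<p}\<times>{..<p}. 2 * exp (-(real n * eps^2 / (8 * T^4))))"
      by (intro sum_mono) (use mBs in auto)
    also have "\<dots> = real p^2 * (2 * exp (-(real n * eps^2 / (8 * T^4))))"
      by (simp add: power2_eq_square)
    finally show ?thesis .
  qed
  have EAB: "E \<subseteq> A \<union> B" using Esub incl unfolding S_def by (rule subset_trans)
  have "measure M E \<le> measure M (A \<union> B)"
    using EAB Ain Bin by (intro finite_measure_mono) auto
  also have "\<dots> \<le> measure M A + measure M B"
    using Ain Bin by (rule measure_Un_le)
  also have "\<dots> \<le> real n * real p * PT + real p^2 * (2 * exp (-(real n * eps^2 / (8 * T^4))))"
    using mA mB by simp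
  finally show ?thesis .
qed

theorem lemma2:
  fixes M :: "nat \<Rightarrow> 'a measure" and p :: "nat \<Rightarrow> nat"
    and X :: "nat \<Rightarrow> nat \<Rightarrow> 'a \<Rightarrow> nat \<Rightarrow> real"
    and r r1 r2 c :: real
  assumes prob: "\<And>n. prob_space (M n)"
    and meas: "\<And>n i j. (\<lambda>w. X n i w j) \<in> borel_measurable (M n)"
    and indep: "\<And>n. prob_space.indep_vars (M n) (\<lambda>_. PiM {..<p n} (\<lambda>_. borel))
                   (\<lambda>i w. restrict (X n i w) {..<p n}) {..<n}"
    and ident: "\<And>n i. i < n \<Longrightarrow>
        distr (M n) (PiM {..<p n} (\<lambda>_. borel)) (\<lambda>w. restrict (X n i w) {..<p n})
      = distr (M n) (PiM {..<p n} (\<lambda>_. borel)) (\<lambda>w. restrict (X n 0 w) {..<p n})"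
    and mean0: "\<And>n j. j < p n \<Longrightarrow> integral\<^sup>L (M n) (\<lambda>w. X n 0 w j) = 0"
    and posdef: "\<And>n v. (\<exists>j < p n. v j \<noteq> 0) \<Longrightarrow>
        (\<Sum>j<p n. \<Sum>k<p n. v j * Theta M X n j k * v k) > 0"
    and C1: "\<exists>K. \<forall>n j k. j < p n \<longrightarrow> k < p n \<longrightarrow> \<bar>Theta M X n j k\<bar> \<le> K"
    and C1': "\<exists>d>0. \<forall>n j k. j < p n \<longrightarrow> k < p n \<longrightarrow> Theta M X n j k \<noteq> 0
                 \<longrightarrow> \<bar>Theta M X n j k\<bar> \<ge> d"
    and C2: "\<exists>K. \<forall>n.
        (\<forall>a\<in>pairs (p n). \<forall>b\<in>pairs (p n). \<bar>Jmat M p X n a b\<bar> \<le> K)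
      \<and> (\<exists>B. is_inverse_on (Jmat M p X n) B (xi M p X n)
           \<and> (\<forall>a\<in>xi M p X n. \<forall>b\<in>xi M p X n. \<bar>B a b\<bar> \<le> K)
           \<and> (\<forall>a\<in>xi M p X n. \<bar>\<Sum>b\<in>xi M p X n. B a b * hvec M p X n b\<bar> \<le> K))"
    and C3: "\<exists>c3>0. \<forall>n. m0 M p X n \<ge> 1 \<longrightarrow> (\<forall>l\<in>xi M p X n. \<forall>x :: nat \<times> nat \<Rightarrow> real.
        (\<Sum>a\<in>xi M p X n. \<bar>(\<Sum>b\<in>xi M p X n - {l}. Jmat M p X n a b * x b) - hvec M p X n a\<bar>) > c3)"
    and r_pos: "r > 0"
    and C4: "\<exists>c4>0. \<forall>n j t. j < p n \<longrightarrow> t \<ge> 0 \<longrightarrow>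
        measure (M n) {w \<in> space (M n). \<bar>X n 0 w j\<bar> > t} < c4 * exp (- (t powr r))"
    and r1: "0 < r1" "r1 < r / (8 + r)"
    and r2: "r2 = min (r / (32 + 4 * r)) ((4 + r) / (32 + 4 * r) - r1 / 4)"
    and c: "0 < c" "c < min r1 r2"
    and p_rate: "(\<lambda>n. real (p n)) \<in> o(\<lambda>n. exp (real n powr (r1 - c)))"
    and m0_rate: "(\<lambda>n. real (m0 M p X n)) \<in> o(\<lambda>n. real n powr (r2 - c))"
  shows "\<forall>e>0. (\<lambda>n. measure (M n)
            {w \<in> space (M n). (real (m0 M p X n))\<^sup>2 * maxdev M p X n w > e}) \<longlonglongrightarrow> 0"
proof (intro allI impI)
  fix e :: real assume e: "e > 0"
  obtain c4 where c4: "c4 > 0" and tail: "\<And>n j t. j < p n \<Longrightarrow> t \<ge> 0 \<Longrightarrow>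
      measure (M n) {w \<in> space (M n). \<bar>X n 0 w j\<bar> > t} < c4 * exp (- (t powr r))"
    using C4 by blast
  define g where "g = r1 - c"
  define a where "a = 2 * (r2 - c)"
  have g0: "g > 0" using c unfolding g_def by simp
  have a0: "a > 0" using c unfolding a_def by simp
  have r8: "8 + r > 0" using r_pos by simp
  define U where "U = (4 + r) / (8 + r)"
  define V where "V = r / (8 + r)"
  have UV: "r * U + 4 * V = r"
  proof -
    have "r * U + 4 * V = (r * (4 + r) + 4 * r) / (8 + r)"
      unfolding U_def V_def by (simp only: times_divide_eq_right add_divide_distrib[symmetric])
    also have "r * (4 + r) + 4 * r = r * (8 + r)" by (simp add: algebra_simps)
    finally show ?thesis using r8 by simp
  qed
  have h1: "r1 < V" unfolding V_def by (rule r1(2))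
  have h2: "4 * r2 \<le> U - r1"
  proof -
    have "r2 \<le> (4 + r) / (32 + 4 * r) - r1 / 4" using r2 by simp
    moreover have "(4 + r) / (32 + 4 * r) = U / 4" unfolding U_def using r8 by (simp add: field_simps)
    ultimately show ?thesis by linarith
  qed
  have key: "4 * g + g * r + 2 * a * r < r"
  proof -
    have f1: "(4 * r2) * r \<le> (U - r1) * r" using h2 r_pos by (intro mult_right_mono) auto
    have f4: "c * r > 0" using c r_pos by simp
    have e1: "4 * g + g * r + 2 * a * r = 4*r1 - 4*c + r1*r - c*r + (4 * r2) * r - 4*(c*r)"
      unfolding g_def a_def by (simp add: algebra_simps)
    have e2: "(U - r1) * r = r * U - r1 * r" by (simp add: algebra_simps)
    show ?thesis using e1 e2 f1 f4 h1 UV c by linarith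
  qed
  define b where "b = (g / r + (1 - 2*a - g) / 4) / 2"
  have gr: "g / r < (1 - 2*a - g) / 4"
  proof -
    have "g < r * ((1 - 2*a - g) / 4)" using key by (simp add: algebra_simps)
    then show ?thesis using r_pos by (simp add: divide_less_eq mult.commute)
  qed
  have gb: "g < b * r"
  proof -
    have hh: "\<And>x z::real. x < z \<Longrightarrow> x < (x+z)/2" by simp
    have "g / r < b" unfolding b_def using hh[OF gr] .
    then show ?thesis using r_pos by (simp add: divide_less_eq)
  qed
  have b0: "b > 0" using gb g0 r_pos by (smt (verit) mult_nonpos_nonneg)
  have b4: "4 * b < 1 - 2*a - g"
  proof -
    have hh: "\<And>x z::real. x < z \<Longrightarrow> 4 * ((x+z)/2) < 4 * z" by simp
    have "4 * b < 4 * ((1 - 2*a - g) / 4)" unfolding b_def by (rule hh[OF gr])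
    then show ?thesis by simp
  qed
  define q where "q = nat \<lceil>a / b\<rceil> + 3"
  have q2: "q \<ge> 2" unfolding q_def by simp
  have bq: "b * real (q - 2) > a"
  proof -
    have "real (q - 2) = real (nat \<lceil>a / b\<rceil>) + 1" unfolding q_def by simp
    also have "\<dots> > a / b" by linarith
    finally have "a / b < real (q - 2)" .
    then show ?thesis using b0 by (simp add: divide_less_eq mult.commute)
  qed
  define S where "S = (\<Sum>k. real (k+1)^q * exp(-(real k powr r)))"
  define K where "K = c4 * S"
  have S0: "S \<ge> 0" unfolding S_def by (rule suminf_nonneg[OF summable_tailq[OF r_pos]]) simp
  have K0: "K \<ge> 0" unfolding K_def using S0 c4 by simp
  have momi: "integrable (M n) (\<lambda>w. \<bar>X n 0 w j\<bar>^q)"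
    and momb: "(\<integral>w. \<bar>X n 0 w j\<bar>^q \<partial>M n) \<le> K" if j: "j < p n" for n j
  proof -
    have tl: "\<And>t. t \<ge> 0 \<Longrightarrow> measure (M n) {w\<in>space (M n). \<bar>X n 0 w j\<bar> > t} \<le> c4 * exp(-(t powr r))"
      using tail[OF j] by (simp add: less_imp_le)
    show "integrable (M n) (\<lambda>w. \<bar>X n 0 w j\<bar>^q)"
      using moment_bound(1)[OF prob meas r_pos _ tl] q2 by simp
    show "(\<integral>w. \<bar>X n 0 w j\<bar>^q \<partial>M n) \<le> K"
      using moment_bound(2)[OF prob meas r_pos _ tl] q2 unfolding K_def S_def by simp
  qed
  define d where "d = 1 - 2*a - 4*b - g"
  have d0: "d > 0" unfolding d_def using b4 by simp
  define br where "br = b * r"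
  define bnd where "bnd = (\<lambda>n::nat. c4 * (real n * exp (real n powr g - real n powr br))
      + 2 * exp (2 * real n powr g - (e^2/8) * real n powr (g + d)))"
  have lim1: "(\<lambda>n::nat. real n * exp (real n powr g - real n powr br)) \<longlonglongrightarrow> 0"
    using g0 gb unfolding br_def by real_asymp
  have lim2: "(\<lambda>n::nat. exp (2 * real n powr g - (e^2/8) * real n powr (g + d))) \<longlonglongrightarrow> 0"
    using g0 d0 e by real_asymp
  have lim: "bnd \<longlonglongrightarrow> 0"
    unfolding bnd_def using tendsto_add[OF tendsto_mult_right_zero[OF lim1, of c4] tendsto_mult_right_zero[OF lim2, of 2]]
    by simp
  define bb where "bb = b * real (q - 2)"
  have lim3: "(\<lambda>n::nat. real n powr (-bb) / real n powr (-a)) \<longlonglongrightarrow> 0"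
    using a0 bq unfolding bb_def by real_asymp
  define thr where "thr = e / (8 * (K + 1))"
  have thr0: "thr > 0" unfolding thr_def using e K0 by simp
  have ev1: "eventually (\<lambda>n. real (m0 M p X n) \<le> real n powr (r2 - c)) sequentially"
    using landau_o.smallD[OF m0_rate, of 1] by (auto elim!: eventually_mono)
  have ev2: "eventually (\<lambda>n. real (p n) \<le> exp (real n powr g)) sequentially"
    using landau_o.smallD[OF p_rate, of 1] unfolding g_def by (auto elim!: eventually_mono)
  have ev3: "eventually (\<lambda>n. real n powr (-bb) / real n powr (-a) < thr) sequentially"
    using order_tendstoD(2)[OF lim3 thr0] .
  have ev4: "eventually (\<lambda>n::nat. n \<ge> 1) sequentially" by (rule eventually_ge_at_top)
  have ev: "eventually (\<lambda>n. measure (M n)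
            {w \<in> space (M n). (real (m0 M p X n))\<^sup>2 * maxdev M p X n w > e} \<le> bnd n) sequentially"
    using ev1 ev2 ev3 ev4
  proof eventually_elim
    case (elim n)
    note m0n = elim(1) and pn = elim(2) and rat = elim(3) and n1 = elim(4)
    have npos: "real n > 0" using n1 by simp
    define T where "T = real n powr b"
    define eps where "eps = e * real n powr (-a)"
    have T1: "T \<ge> 1" unfolding T_def using n1 b0 by (intro ge_one_powr_ge_zero) auto
    have eps0: "eps > 0" unfolding eps_def using e npos by simp
    have Tq: "T^(q-2) = real n powr bb" unfolding T_def bb_def using npos
      by (simp add: powr_power mult.commute)
    have biasn: "4 * K / T^(q-2) \<le> eps / 2"
    proof -
      have "real n powr (-bb) < thr * real n powr (-a)" using rat npos by (simp add: divide_less_eq)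
      then have "4 * K * real n powr (-bb) \<le> 4 * K * (thr * real n powr (-a))"
        using K0 by (intro mult_left_mono) auto
      also have "\<dots> = (K / (K+1)) * (eps / 2)" unfolding thr_def eps_def using K0 by (simp add: field_simps)
      also have "\<dots> \<le> 1 * (eps / 2)" using K0 eps0 by (intro mult_right_mono) auto
      finally have "4 * K * real n powr (-bb) \<le> eps / 2" by simp
      moreover have "4 * K / T^(q-2) = 4 * K * real n powr (-bb)"
        unfolding Tq by (simp add: powr_minus divide_inverse)
      ultimately show ?thesis by simp
    qed
    define E where "E = {w \<in> space (M n). (real (m0 M p X n))\<^sup>2 * maxdev M p X n w > e}"
    have Esub: "E \<subseteq> {w \<in> space (M n). Max (insert 0 {\<bar>(\<Sum>i<n. X n i w j * X n i w k) / real n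
             - (\<integral>w. X n 0 w j * X n 0 w k \<partial>M n)\<bar> | j k. j < p n \<and> k < p n}) > eps}"
    proof
      fix w assume "w \<in> E"
      then have ws: "w \<in> space (M n)" and big: "(real (m0 M p X n))\<^sup>2 * maxdev M p X n w > e"
        unfolding E_def by auto
      have m2: "(real (m0 M p X n))\<^sup>2 \<le> real n powr a"
      proof -
        have "(real (m0 M p X n))\<^sup>2 \<le> (real n powr (r2 - c))\<^sup>2"
          using m0n by (intro power_mono) auto
        also have "\<dots> = real n powr a" unfolding a_def using npos
          by (simp add: powr_power mult.commute)
        finally show ?thesis .
      qed
      have md: "maxdev M p X n w > 0"
      proof (rule ccontr)
        assume "\<not> maxdev M p X n w > 0"
        then have "(real (m0 M p X n))\<^sup>2 * maxdev M p X n w \<le> 0"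
          by (simp add: mult_nonneg_nonpos)
        then show False using big e by simp
      qed
      have "(real (m0 M p X n))\<^sup>2 * maxdev M p X n w \<le> real n powr a * maxdev M p X n w"
        using m2 md by (intro mult_right_mono) auto
      then have lt: "e < real n powr a * maxdev M p X n w" using big by linarith
      have pa: "real n powr a > 0" using npos by simp
      have "e / real n powr a < maxdev M p X n w"
        using lt pa by (simp add: pos_divide_less_eq mult.commute)
      moreover have "eps = e / real n powr a" unfolding eps_def by (simp add: powr_minus divide_inverse)
      ultimately have "maxdev M p X n w > eps" by simp
      then show "w \<in> {w \<in> space (M n). Max (insert 0 {\<bar>(\<Sum>i<n. X n i w j * X n i w k) / real n
             - (\<integral>w. X n 0 w j * X n 0 w k \<partial>M n)\<bar> | j k. j < p n \<and> k < p n}) > eps}"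
        using ws unfolding maxdev_def Scov_def Theta_def by simp
    qed
    have PT: "measure (M n) {w \<in> space (M n). \<bar>X n 0 w j\<bar> > T} \<le> c4 * exp (-(T powr r))" if "j < p n" for j
      using tail[OF that, of T] T1 by simp
    have C: "measure (M n) E \<le> real n * real (p n) * (c4 * exp (-(T powr r)))
        + real (p n)^2 * (2 * exp (-(real n * eps^2 / (8 * T^4))))"
      by (rule core[OF prob meas indep ident PT momi momb T1 q2 _ eps0 biasn Esub]) (use n1 in auto)
    have TR: "T powr r = real n powr br" unfolding T_def br_def by (simp add: powr_powr)
    have EX: "real n * eps^2 / (8 * T^4) = (e^2/8) * real n powr (g + d)"
    proof -
      have gd: "g + d = 1 + (-2*a) - 4*b" unfolding d_def by simp
      have "real n powr (g + d) = real n powr 1 * real n powr (-2*a) / real n powr (4*b)"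
        unfolding gd by (simp only: powr_diff powr_add)
      also have "\<dots> = real n * (real n powr (-a))^2 / T^4"
        unfolding T_def using npos by (simp add: powr_power mult.commute)
      finally show ?thesis unfolding eps_def by (simp add: field_simps power_mult_distrib)
    qed
    have p0: "real (p n) \<ge> 0" by simp
    have t1: "real n * real (p n) * (c4 * exp (-(T powr r)))
        \<le> c4 * (real n * exp (real n powr g - real n powr br))"
    proof -
      have "real n * real (p n) * (c4 * exp (-(T powr r))) \<le> real n * exp (real n powr g) * (c4 * exp (-(T powr r)))"
        using pn npos c4 by (intro mult_right_mono mult_left_mono) auto
      also have "\<dots> = c4 * (real n * exp (real n powr g - real n powr br))"
        unfolding TR by (simp add: exp_diff exp_minus field_simps)
      finally show ?thesis .
    qed
    have t2: "real (p n)^2 * (2 * exp (-(real n * eps^2 / (8 * T^4))))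
        \<le> 2 * exp (2 * real n powr g - (e^2/8) * real n powr (g + d))"
    proof -
      have "real (p n)^2 \<le> (exp (real n powr g))^2" using pn by (intro power_mono) auto
      then have "real (p n)^2 * (2 * exp (-(real n * eps^2 / (8 * T^4))))
          \<le> (exp (real n powr g))^2 * (2 * exp (-(real n * eps^2 / (8 * T^4))))"
        by (intro mult_right_mono) auto
      also have "\<dots> = 2 * exp (2 * real n powr g - (e^2/8) * real n powr (g + d))"
        unfolding EX by (simp add: exp_diff exp_minus field_simps power2_eq_square exp_add[symmetric])
      finally show ?thesis .
    qed
    show ?case using C t1 t2 unfolding E_def bnd_def by linarith
  qed
  show "(\<lambda>n. measure (M n)
            {w \<in> space (M n). (real (m0 M p X n))\<^sup>2 * maxdev M p X n w > e}) \<longlonglongrightarrow> 0"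
    by (rule tendsto_sandwich[OF _ ev tendsto_const lim]) simp
qed

end
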